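(* Let $m$ be a non-negative integer and let $z\in\mathbb{C}$ with $\operatorname{Re} z>m$. Then $$\frac{2^{z-1}}{\sqrt{\pi}}\,\Gamma\!\left(\frac{z+m+1}{2}\right)\Gamma\!\left(\frac{z-m}{2}\right)=\sum_{n=0}^{m}\frac{\Gamma(z-n)}{2^n\,n!}\,(m-n+1)_{2n}.$$
   Context: $\Gamma$ denotes Euler's gamma function. $(a)_k$ denotes the Pochhammer symbol (rising factorial): $(a)_0=1$ and $(a)_k=a(a+1)\cdots(a+k-1)$ for integers $k\ge 1$. *)

theory Defs
  imports "HOL-Analysis.Analysis"
begin

end

theory Submission
  imports Defs
begin

definition cf :: "nat \<Rightarrow> nat \<Rightarrow> complex" where
  "cf M n = (if n \<le> M then fact (M+n) / (fact (M-n) * fact n * 2^n) else 0)"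

lemma poch_fact0: "fact j * pochhammer (of_nat (Suc j) :: complex) i = fact (j+i)"
proof (induction i)
  case 0 then show ?case by simp
next
  case (Suc i)
  have "fact j * pochhammer (of_nat (Suc j) :: complex) (Suc i) = (fact j * pochhammer (of_nat (Suc j)) i) * (of_nat (Suc j) + of_nat i)"
    by (simp add: pochhammer_Suc)
  also have "\<dots> = fact (j + Suc i)" using Suc by (simp add: fact_Suc algebra_simps)
  finally show ?case .
qed

lemma poch_fact: "pochhammer (of_nat (Suc j) :: complex) i = fact (j+i) / fact j"
  using poch_fact0[of j i] by (simp add: field_simps)

lemma cf_poch: "n \<le> M \<Longrightarrow> pochhammer (of_nat (M-n+1) :: complex) (2*n) / (2^n * fact n) = cf M n"
  using poch_fact[of "M-n" "2*n"] by (simp add: cf_def field_simps)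

lemma cf0: "cf M 0 = 1" by (simp add: cf_def)

lemma nz_aux: "c > 0 \<Longrightarrow> (of_nat j :: complex) + of_nat c \<noteq> 0"
proof -
  assume "c > 0"
  have "(of_nat j :: complex) + of_nat c = of_nat (j + c)" by simp
  also have "\<dots> \<noteq> 0" using \<open>c > 0\<close> by (simp only: of_nat_eq_0_iff)
  finally show ?thesis .
qed

lemma coef_gen:
  assumes "k = n + 1 + j"
  shows "cf (k+2) (n+1) - cf k (n+1) + (of_nat n - of_nat k - 2) * cf (k+2) n - (of_nat n + of_nat k + 1) * cf k n = 0"
proof -
  define F where "F = (fact (2*n+j+1) :: complex)"
  define J where "J = (fact j :: complex)"
  define N where "N = (fact n :: complex)"
  define x where "x = (of_nat j :: complex)"
  define y where "y = (of_nat n :: complex)"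
  have nz: "J \<noteq> 0" "N \<noteq> 0" "x+1 \<noteq> 0" "x+2 \<noteq> 0" "x+3 \<noteq> 0" "y+1 \<noteq> 0" "(2::complex)^n \<noteq> 0"
    unfolding J_def N_def x_def y_def
    using nz_aux[of 1 j] nz_aux[of 2 j] nz_aux[of 3 j] nz_aux[of 1 n] by simp_all
  define Den where "Den = J * N * 2^n * (x+1)*(x+2)*(x+3)*(y+1)*2"
  have Dnz: "Den \<noteq> 0" unfolding Den_def using nz by simp
  have a0': "cf (k+2) n = F * (2*y+x+3)*(2*y+x+2) / ((x+3)*(x+2)*(x+1)*J*N*2^n)"
    unfolding cf_def F_def J_def N_def x_def y_def assms
    by (simp add: fact_Suc numeral_eq_Suc add_ac mult_ac)
  have a1': "cf (k+2) (n+1) = F * (2*y+x+4)*(2*y+x+3)*(2*y+x+2) / ((x+2)*(x+1)*J*((y+1)*N)*(2*2^n))"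
    unfolding cf_def F_def J_def N_def x_def y_def assms
    by (simp add: fact_Suc numeral_eq_Suc add_ac mult_ac)
  have b0': "cf k n = F / ((x+1)*J*N*2^n)"
    unfolding cf_def F_def J_def N_def x_def y_def assms
    by (simp add: fact_Suc numeral_eq_Suc add_ac mult_ac)
  have b1': "cf k (n+1) = F * (2*y+x+2) / (J*((y+1)*N)*(2*2^n))"
    unfolding cf_def F_def J_def N_def x_def y_def assms
    by (simp add: fact_Suc numeral_eq_Suc add_ac mult_ac)
  have a0: "cf (k+2) n = F * ((2*y+x+3)*(2*y+x+2)*(y+1)*2) / Den"
    unfolding a0' Den_def by (subst frac_eq_eq, use nz in simp, use nz in simp, algebra)
  have a1: "cf (k+2) (n+1) = F * ((2*y+x+4)*(2*y+x+3)*(2*y+x+2)*(x+3)) / Den"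
    unfolding a1' Den_def by (subst frac_eq_eq, use nz in simp, use nz in simp, algebra)
  have b0: "cf k n = F * ((x+2)*(x+3)*(y+1)*2) / Den"
    unfolding b0' Den_def by (subst frac_eq_eq, use nz in simp, use nz in simp, algebra)
  have b1: "cf k (n+1) = F * ((2*y+x+2)*(x+1)*(x+2)*(x+3)) / Den"
    unfolding b1' Den_def by (subst frac_eq_eq, use nz in simp, use nz in simp, algebra)
  have e1: "(of_nat n - of_nat k - 2 :: complex) = -x-3" unfolding assms x_def y_def by simp
  have e2: "(of_nat n + of_nat k + 1 :: complex) = 2*y+x+2" unfolding assms x_def y_def by simp
  have p: "F * ((2*y+x+4)*(2*y+x+3)*(2*y+x+2)*(x+3)) - F * ((2*y+x+2)*(x+1)*(x+2)*(x+3))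
      + (-x-3) * (F * ((2*y+x+3)*(2*y+x+2)*(y+1)*2)) - (2*y+x+2) * (F * ((x+2)*(x+3)*(y+1)*2)) = 0"
    by algebra
  show ?thesis unfolding a0 a1 b0 b1 e1 e2
    using arg_cong[OF p, of "\<lambda>t. t / Den"] by (simp add: diff_divide_distrib add_divide_distrib)
qed

lemma coef_k:
  "cf (k+2) (k+1) - cf k (k+1) + (of_nat k - of_nat k - 2) * cf (k+2) k - (of_nat k + of_nat k + 1) * cf k k = 0"
proof -
  define F where "F = (fact (2*k) :: complex)"
  define N where "N = (fact k :: complex)"
  define y where "y = (of_nat k :: complex)"
  have nz: "N \<noteq> 0" "y+1 \<noteq> 0" "(2::complex)^k \<noteq> 0"
    unfolding N_def y_def using nz_aux[of 1 k] by simp_all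
  have a1': "cf (k+2) (k+1) = F*(2*y+3)*(2*y+2)*(2*y+1) / ((y+1)*N*(2*2^k))"
    unfolding cf_def F_def N_def y_def
    by (simp add: fact_Suc numeral_eq_Suc add_ac mult_ac)
  have a0': "cf (k+2) k = F*(2*y+2)*(2*y+1) / (2*N*2^k)"
    unfolding cf_def F_def N_def y_def
    by (simp add: fact_Suc numeral_eq_Suc add_ac mult_ac)
  have b0': "cf k k = F / (N*2^k)"
    unfolding cf_def F_def N_def y_def by (simp add: mult_2)
  have b1: "cf k (k+1) = 0" unfolding cf_def by simp
  define Den where "Den = (y+1)*N*(2*2^k)"
  have a1: "cf (k+2) (k+1) = F*(2*y+3)*(2*y+2)*(2*y+1) / Den" unfolding a1' Den_def ..
  have a0: "cf (k+2) k = F*(2*y+2)*(2*y+1)*(y+1) / Den"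
    unfolding a0' Den_def by (subst frac_eq_eq, use nz in simp, use nz in simp, algebra)
  have b0: "cf k k = F*(y+1)*2 / Den"
    unfolding b0' Den_def by (subst frac_eq_eq, use nz in simp, use nz in simp, algebra)
  have e2: "(of_nat k + of_nat k + 1 :: complex) = 2*y+1" unfolding y_def by simp
  have p: "F*(2*y+3)*(2*y+2)*(2*y+1) - 0 + (-2) * (F*(2*y+2)*(2*y+1)*(y+1)) - (2*y+1) * (F*(y+1)*2) = 0"
    by algebra
  show ?thesis unfolding a0 a1 b0 b1 e2
    using arg_cong[OF p, of "\<lambda>t. t / Den"] by (simp add: diff_divide_distrib add_divide_distrib)
qed

lemma coef_k1:
  "cf (k+2) (k+2) - cf (k+2) (k+1) = 0"
proof -
  define F where "F = (fact (2*k+3) :: complex)"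
  define N where "N = (fact (k+1) :: complex)"
  define y where "y = (of_nat k :: complex)"
  have nz: "N \<noteq> 0" "y+2 \<noteq> 0" "(2::complex)^k \<noteq> 0"
    unfolding N_def y_def using nz_aux[of 2 k] nz_aux[of 1 k] by (simp_all add: add.commute)
  have a1': "cf (k+2) (k+2) = F*(2*y+4) / ((y+2)*N*(2*2*2^k))"
    unfolding cf_def F_def N_def y_def
    by (simp add: fact_Suc numeral_eq_Suc add_ac mult_ac)
  have a0': "cf (k+2) (k+1) = F / (N*(2*2^k))"
    unfolding cf_def F_def N_def y_def
    by (simp add: fact_Suc numeral_eq_Suc add_ac mult_ac)
  show ?thesis unfolding a0' a1' 
    by (subst eq_iff_diff_eq_0[symmetric], subst frac_eq_eq, use nz in simp, use nz in simp, algebra)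
qed

lemma coef_all:
  "cf (k+2) (n+1) - cf k (n+1) + (of_nat n - of_nat k - 2) * cf (k+2) n - (of_nat n + of_nat k + 1) * cf k n = 0"
proof -
  consider "n + 1 \<le> k" | "n = k" | "n = k+1" | "n = k+2" | "n > k+2" by linarith
  then show ?thesis
  proof cases
    case 1 then show ?thesis using coef_gen[of k n "k-n-1"] by simp
  next
    case 2 then show ?thesis using coef_k[of k] by simp
  next
    case 3 then show ?thesis using coef_k1[of k] by (simp add: cf_def)
  next
    case 4 then show ?thesis by (simp add: cf_def)
  next
    case 5 then show ?thesis by (simp add: cf_def)
  qed
qed

lemma not_npi: "Re (w::complex) > 0 \<Longrightarrow> w \<notin> \<int>\<^sub>\<le>\<^sub>0"
  by (auto elim!: nonpos_Ints_cases)

lemma Srec: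
  fixes z :: complex assumes "Re z > real k + 2"
  shows "(z - of_nat k - 2) * (\<Sum>n=0..k+2. cf (k+2) n * Gamma (z - of_nat n))
       = (z + of_nat k + 1) * (\<Sum>n=0..k. cf k n * Gamma (z - of_nat n))"
proof -
  define G where "G n = Gamma (z - of_nat n)" for n
  define a where "a n = cf (k+2) n" for n
  define b where "b n = cf k n" for n
  have Gp: "Gamma (z - of_nat n + 1) = (z - of_nat n) * G n" if "n \<le> k+2" for n
    unfolding G_def using that assms by (intro Gamma_plus1 not_npi) simp
  have GS: "Gamma (z - of_nat (Suc n) + 1) = G n" for n
  proof -
    have "z - of_nat (Suc n) + 1 = z - of_nat n" by simp
    then show ?thesis unfolding G_def by simp
  qed
  have bext: "(\<Sum>n=0..k. b n * G n) = (\<Sum>n=0..k+2. b n * G n)"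
    by (simp add: b_def cf_def)
  have step1: "(z - of_nat k - 2) * (\<Sum>n=0..k+2. a n * G n) - (z + of_nat k + 1) * (\<Sum>n=0..k+2. b n * G n)
     = (\<Sum>n=0..k+2. (a n - b n) * Gamma (z - of_nat n + 1)) +
       (\<Sum>n=0..k+2. ((of_nat n - of_nat k - 2) * a n - (of_nat n + of_nat k + 1) * b n) * G n)"
    unfolding sum_distrib_left sum_subtractf[symmetric] sum.distrib[symmetric]
    by (rule sum.cong[OF refl], subst Gp) (auto simp: algebra_simps)
  have step2: "(\<Sum>n=0..k+2. (a n - b n) * Gamma (z - of_nat n + 1)) = (\<Sum>n=0..k+2. (a (n+1) - b (n+1)) * G n)"
  proof -
    have "(\<Sum>n=0..k+2. (a n - b n) * Gamma (z - of_nat n + 1)) = (\<Sum>n=0..Suc (k+1). (a n - b n) * Gamma (z - of_nat n + 1))"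
      by simp
    also have "\<dots> = (\<Sum>n=0..k+1. (a (n+1) - b (n+1)) * G n)"
      by (subst sum.atLeast0_atMost_Suc_shift) (simp add: a_def b_def cf0 GS G_def)
    also have "\<dots> = (\<Sum>n=0..Suc (k+1). (a (n+1) - b (n+1)) * G n)"
      by (subst sum.atLeast0_atMost_Suc) (simp add: a_def b_def cf_def G_def)
    finally show ?thesis by simp
  qed
  have "(z - of_nat k - 2) * (\<Sum>n=0..k+2. a n * G n) - (z + of_nat k + 1) * (\<Sum>n=0..k+2. b n * G n)
     = (\<Sum>n=0..k+2. (a (n+1) - b (n+1) + (of_nat n - of_nat k - 2) * a n - (of_nat n + of_nat k + 1) * b n) * G n)"
    unfolding step1 step2 sum.distrib[symmetric] by (rule sum.cong) (auto simp: algebra_simps)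
  also have "\<dots> = 0" unfolding a_def b_def using coef_all[of k] by simp
  finally show ?thesis unfolding bext[symmetric] unfolding a_def b_def G_def by simp
qed

lemma two_powr: "(2::complex) powr w = exp (w * of_real (ln 2))"
proof -
  have "ln (2::complex) = ln (of_real 2)" by simp
  also have "\<dots> = of_real (ln 2)" by (rule Ln_of_real) simp
  finally show ?thesis by (simp add: powr_def)
qed

lemma dup:
  fixes w :: complex assumes "Re w > 0"
  shows "exp ((2*w - 1) * of_real (ln 2)) / of_real (sqrt pi) * Gamma w * Gamma (w + 1/2) = Gamma (2*w)"
proof -
  have "Gamma w * Gamma (w + 1/2) =
             exp ((1 - 2*w) * of_real (ln 2)) * of_real (sqrt pi) * Gamma (2*w)"
    by (rule Gamma_legendre_duplication) (use assms in \<open>auto intro!: not_npi\<close>)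
  moreover have "exp ((2*w - 1) * of_real (ln 2)) * exp ((1 - 2*w) * of_real (ln 2)) = (1::complex)"
    by (simp add: exp_add[symmetric] algebra_simps)
  ultimately have "exp ((2*w - 1) * of_real (ln 2)) * (Gamma w * Gamma (w + 1/2)) = of_real (sqrt pi) * Gamma (2*w)"
    by (metis (no_types, lifting) mult.assoc mult.commute mult_1)
  moreover have "complex_of_real (sqrt pi) \<noteq> 0" by simp
  ultimately show ?thesis by (simp add: field_simps)
qed

definition LL :: "complex \<Rightarrow> nat \<Rightarrow> complex" where
  "LL z m = (2 powr (z - 1) / complex_of_real (sqrt pi)) * Gamma ((z + of_nat m + 1) / 2)
           * Gamma ((z - of_nat m) / 2)"

lemma L0: assumes "Re z > 0" shows "LL z 0 = Gamma z"
proof -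
  have d: "exp ((2*(z/2) - 1) * of_real (ln 2)) / of_real (sqrt pi) * Gamma (z/2) * Gamma (z/2 + 1/2) = Gamma (2*(z/2))"
    by (rule dup) (use assms in simp)
  have e: "z/2 + 1/2 = (z+1)/2" "2*(z/2) = z" by (simp_all add: field_simps)
  show ?thesis using d unfolding e LL_def two_powr by (simp add: mult_ac)
qed

lemma L1: assumes "Re z > 1" shows "LL z 1 = z * Gamma (z - 1)"
proof -
  have d: "exp ((2*((z-1)/2) - 1) * of_real (ln 2)) / of_real (sqrt pi) * Gamma ((z-1)/2) * Gamma ((z-1)/2 + 1/2) = Gamma (2*((z-1)/2))"
    by (rule dup) (use assms in simp)
  have e: "(z-1)/2 + 1/2 = z/2" "2*((z-1)/2) = z - 1" "2*((z-1)/2) - 1 = z - 2" by (simp_all add: field_simps)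
  have g: "Gamma ((z + of_nat 1 + 1)/2) = z/2 * Gamma (z/2)"
  proof -
    have eq: "(z + of_nat 1 + 1)/2 = z/2 + 1" by (simp add: field_simps)
    show ?thesis unfolding eq by (rule Gamma_plus1, rule not_npi) (use assms in simp)
  qed
  have p: "exp ((z - 1) * of_real (ln 2)) = 2 * exp ((z-2) * of_real (ln 2))"
  proof -
    have "(z - 1) * of_real (ln 2) = (z-2) * of_real (ln 2) + of_real (ln 2)" by (simp add: algebra_simps)
    then have "exp ((z - 1) * of_real (ln 2)) = exp ((z-2) * of_real (ln 2)) * exp (of_real (ln 2))"
      by (simp add: exp_add)
    also have "exp (of_real (ln 2) :: complex) = 2"
      by (subst exp_of_real) simp
    finally show ?thesis by simp
  qed
  have d': "exp ((z - 2) * of_real (ln 2)) / of_real (sqrt pi) * Gamma ((z-1)/2) * Gamma (z/2) = Gamma (z - 1)"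
    using d unfolding e(3) e(1) e(2) diff_diff_eq by simp
  show ?thesis unfolding LL_def two_powr g p
    using arg_cong[OF d', of "\<lambda>t. z * t"] by (simp add: field_simps)
qed

lemma Lrec:
  assumes "Re z > real k + 2"
  shows "(z - of_nat k - 2) * LL z (k+2) = (z + of_nat k + 1) * LL z k"
proof -
  have g1: "Gamma ((z + of_nat (k+2) + 1)/2) = (z + of_nat k + 1)/2 * Gamma ((z + of_nat k + 1)/2)"
  proof -
    have eq: "(z + of_nat (k+2) + 1)/2 = (z + of_nat k + 1)/2 + 1" by (simp add: field_simps)
    show ?thesis unfolding eq by (rule Gamma_plus1, rule not_npi) (use assms in simp)
  qed
  have g2: "Gamma ((z - of_nat k)/2) = (z - of_nat k - 2)/2 * Gamma ((z - of_nat (k+2))/2)"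
  proof -
    have eq: "(z - of_nat k)/2 = (z - of_nat k - 2)/2 + 1" by (simp add: field_simps)
    have eq2: "(z - of_nat (k+2))/2 = (z - of_nat k - 2)/2" by (simp add: algebra_simps)
    show ?thesis unfolding eq eq2 by (rule Gamma_plus1, rule not_npi) (use assms in simp)
  qed
  show ?thesis unfolding LL_def g1 g2 by (simp add: field_simps)
qed

lemma main_aux:
  fixes z :: complex
  shows "Re z > real m \<Longrightarrow> LL z m = (\<Sum>n=0..m. cf m n * Gamma (z - of_nat n))"
proof (induction m rule: less_induct)
  case (less m)
  consider "m = 0" | "m = 1" | k where "m = k + 2" by (metis One_nat_def add_2_eq_Suc' not0_implies_Suc)
  then show ?case
  proof cases
    case 1 then show ?thesis using L0[of z] less.prems by (simp add: cf_def)
  next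
    case 2
    have "Gamma (z - 1 + 1) = (z - 1) * Gamma (z - 1)"
      by (rule Gamma_plus1, rule not_npi) (use less.prems 2 in simp)
    then have "Gamma z = (z - 1) * Gamma (z - 1)" by simp
    then show ?thesis using L1[of z] less.prems 2 by (simp add: cf_def algebra_simps)
  next
    case 3
    have IH: "LL z k = (\<Sum>n=0..k. cf k n * Gamma (z - of_nat n))"
      using less.IH[of k] less.prems 3 by simp
    have nz: "z - of_nat k - 2 \<noteq> 0"
    proof
      assume "z - of_nat k - 2 = 0"
      then have "Re (z - of_nat k - 2) = 0" by simp
      then show False using less.prems 3 by simp
    qed
    have "(z - of_nat k - 2) * LL z (k+2) = (z - of_nat k - 2) * (\<Sum>n=0..k+2. cf (k+2) n * Gamma (z - of_nat n))"
      using Lrec[of k z] Srec[of k z] IH less.prems 3 by simp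
    then show ?thesis using nz 3 by simp
  qed
qed

theorem mainTheorem1:
  fixes m :: nat and z :: complex
  assumes "Re z > real m"
  shows "(2 powr (z - 1) / complex_of_real (sqrt pi)) * Gamma ((z + of_nat m + 1) / 2)
           * Gamma ((z - of_nat m) / 2)
         = (\<Sum>n=0..m. Gamma (z - of_nat n) / (2 ^ n * of_nat (fact n))
              * pochhammer (of_nat (m - n + 1)) (2 * n))"
proof -
  have "(2 powr (z - 1) / complex_of_real (sqrt pi)) * Gamma ((z + of_nat m + 1) / 2)
           * Gamma ((z - of_nat m) / 2) = (\<Sum>n=0..m. cf m n * Gamma (z - of_nat n))"
    using main_aux[OF assms] unfolding LL_def .
  also have "\<dots> = (\<Sum>n=0..m. Gamma (z - of_nat n) / (2 ^ n * of_nat (fact n))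
              * pochhammer (of_nat (m - n + 1)) (2 * n))"
  proof (rule sum.cong[OF refl])
    fix n assume "n \<in> {0..m}"
    then have "pochhammer (of_nat (m-n+1) :: complex) (2*n) / (2^n * fact n) = cf m n"
      by (intro cf_poch) simp
    then show "cf m n * Gamma (z - of_nat n) = Gamma (z - of_nat n) / (2 ^ n * of_nat (fact n))
              * pochhammer (of_nat (m - n + 1)) (2 * n)"
      by (simp add: field_simps)
  qed
  finally show ?thesis .
qed

end
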